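(* Let $A$ be an algebra whose commutator is commutative and distributive w.r.t. arbitrary joins and such that $[\theta,\nabla_A]_A=\theta$ for all $\theta\in\mathrm{Con}(A)$. Then: (a) if $A$ is strongly Baer, then $A$ is semiprime; (b) if $A$ is Baer and has principal commutators, then $A$ is semiprime.
   Context: Let $A$ be an algebra of a fixed signature. $\mathrm{Con}(A)$ is the complete lattice of congruences of $A$, with bottom $\Delta_A$ and top $\nabla_A=A^2$; $\mathrm{PCon}(A)$ is the set of principal congruences of $A$. $[\cdot,\cdot]_A$ is the term condition commutator: for $\alpha,\beta,\mu\in\mathrm{Con}(A)$, $C(\alpha,\beta;\mu)$ means that for all $n,k$, every $(n+k)$-ary term $t$, all $(a_i,b_i)\in\alpha$ and $(c_j,d_j)\in\beta$: $(t(\bar a,\bar c),t(\bar a,\bar d))\in\mu$ iff $(t(\bar b,\bar c),t(\bar b,\bar d))\in\mu$; $[\alpha,\beta]_A=\bigcap\{\mu: C(\alpha,\beta;\mu)\}$; it satisfies $[\alpha,\beta]_A\subseteq\alpha\cap\beta$. "The commutator of $A$ is commutative and distributive w.r.t. arbitrary joins" means $[\alpha,\beta]_A=[\beta,\alpha]_A$ and $[\bigvee_{i}\alpha_i,\beta]_A=\bigvee_{i}[\alpha_i,\beta]_A$ for all families. Set $[\alpha,\beta]^1_A=[\alpha,\beta]_A$ and $[\alpha,\beta]^{n+1}_A=[[\alpha,\beta]^n_A,[\alpha,\beta]^n_A]_A$. A congruence $\phi\neq\nabla_A$ is prime if $[\alpha,\beta]_A\subseteq\phi$ implies $\alpha\subseteq\phi$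 or $\beta\subseteq\phi$; $\rho_A(\theta)$ is the intersection of all prime congruences containing $\theta$ ($\nabla_A$ if none); $A$ is semiprime if $\rho_A(\Delta_A)=\Delta_A$. For $\beta\in\mathrm{Con}(A)$, $\beta^\perp=\bigvee\{\alpha\in\mathrm{Con}(A):[\alpha,\beta]_A=\Delta_A\}$. $\mathcal B(\mathrm{Con}(A))$ is the set of complemented elements of the lattice $\mathrm{Con}(A)$. $A$ is strongly Baer iff $\theta^\perp\in\mathcal B(\mathrm{Con}(A))$ for all $\theta\in\mathrm{Con}(A)$, and Baer iff $\theta^\perp\in\mathcal B(\mathrm{Con}(A))$ for all $\theta\in\mathrm{PCon}(A)$. $A$ has principal commutators iff $[\alpha,\beta]_A\in\mathrm{PCon}(A)$ for all $\alpha,\beta\in\mathrm{PCon}(A)$. *)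

theory Defs
  imports Main
begin

text \<open>An algebra of a fixed signature is given by
  a type of operation symbols 'f, an arity function ar, and an interpretation
  op of each symbol as an operation on the carrier, which is the whole type 'a.
  op f is only meaningful on argument lists of length ar f.\<close>

datatype 'f trm = Var nat | App 'f "'f trm list"

fun eval :: "('f \<Rightarrow> 'a list \<Rightarrow> 'a) \<Rightarrow> (nat \<Rightarrow> 'a) \<Rightarrow> 'f trm \<Rightarrow> 'a" where
  "eval op v (Var i) = v i"
| "eval op v (App f ts) = op f (map (eval op v) ts)"

fun wf_trm :: "('f \<Rightarrow> nat) \<Rightarrow> 'f trm \<Rightarrow> bool" where
  "wf_trm ar (Var i) = True"
| "wf_trm ar (App f ts) = (length ts = ar f \<and> (\<forall>t\<in>set ts. wf_trm ar t))"

fun vars :: "'f trm \<Rightarrow> nat set" where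
  "vars (Var i) = {i}"
| "vars (App f ts) = (\<Union>t\<in>set ts. vars t)"

definition is_congruence :: "('f \<Rightarrow> nat) \<Rightarrow> ('f \<Rightarrow> 'a list \<Rightarrow> 'a) \<Rightarrow> 'a rel \<Rightarrow> bool" where
  "is_congruence ar op \<theta> \<longleftrightarrow> equiv UNIV \<theta> \<and>
     (\<forall>f xs ys. length xs = ar f \<and> length ys = ar f \<and> list_all2 (\<lambda>x y. (x, y) \<in> \<theta>) xs ys
        \<longrightarrow> (op f xs, op f ys) \<in> \<theta>)"

definition Con :: "('f \<Rightarrow> nat) \<Rightarrow> ('f \<Rightarrow> 'a list \<Rightarrow> 'a) \<Rightarrow> 'a rel set" where
  "Con ar op = {\<theta>. is_congruence ar op \<theta>}"

definition Cg :: "('f \<Rightarrow> nat) \<Rightarrow> ('f \<Rightarrow> 'a list \<Rightarrow> 'a) \<Rightarrow> 'a rel \<Rightarrow> 'a rel" where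
  "Cg ar op X = \<Inter>{\<theta> \<in> Con ar op. X \<subseteq> \<theta>}"

definition CJoin :: "('f \<Rightarrow> nat) \<Rightarrow> ('f \<Rightarrow> 'a list \<Rightarrow> 'a) \<Rightarrow> 'a rel set \<Rightarrow> 'a rel" where
  "CJoin ar op S = Cg ar op (\<Union>S)"

definition PCon :: "('f \<Rightarrow> nat) \<Rightarrow> ('f \<Rightarrow> 'a list \<Rightarrow> 'a) \<Rightarrow> 'a rel set" where
  "PCon ar op = {Cg ar op {(a, b)} | a b. True}"

definition TC :: "('f \<Rightarrow> nat) \<Rightarrow> ('f \<Rightarrow> 'a list \<Rightarrow> 'a) \<Rightarrow> 'a rel \<Rightarrow> 'a rel \<Rightarrow> 'a rel \<Rightarrow> bool" where
  "TC ar op \<alpha> \<beta> \<mu> \<longleftrightarrow>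
    (\<forall>(n::nat) (k::nat) t a b c d.
       wf_trm ar t \<and> vars t \<subseteq> {..<n + k} \<and>
       (\<forall>i<n. (a i, b i) \<in> \<alpha>) \<and> (\<forall>j<k. (c j, d j) \<in> \<beta>) \<longrightarrow>
       (let env = (\<lambda>x y i. if i < n then x i else y (i - n)) in
         ((eval op (env a c) t, eval op (env a d) t) \<in> \<mu> \<longleftrightarrow>
          (eval op (env b c) t, eval op (env b d) t) \<in> \<mu>)))"

definition comm :: "('f \<Rightarrow> nat) \<Rightarrow> ('f \<Rightarrow> 'a list \<Rightarrow> 'a) \<Rightarrow> 'a rel \<Rightarrow> 'a rel \<Rightarrow> 'a rel" where
  "comm ar op \<alpha> \<beta> = \<Inter>{\<mu> \<in> Con ar op. TC ar op \<alpha> \<beta> \<mu>}"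

definition comm_commutative_distributive :: "('f \<Rightarrow> nat) \<Rightarrow> ('f \<Rightarrow> 'a list \<Rightarrow> 'a) \<Rightarrow> bool" where
  "comm_commutative_distributive ar op \<longleftrightarrow>
     (\<forall>\<alpha>\<in>Con ar op. \<forall>\<beta>\<in>Con ar op. comm ar op \<alpha> \<beta> = comm ar op \<beta> \<alpha>) \<and>
     (\<forall>S \<subseteq> Con ar op. \<forall>\<beta>\<in>Con ar op.
        comm ar op (CJoin ar op S) \<beta> = CJoin ar op ((\<lambda>\<alpha>. comm ar op \<alpha> \<beta>) ` S))"

definition prime_con :: "('f \<Rightarrow> nat) \<Rightarrow> ('f \<Rightarrow> 'a list \<Rightarrow> 'a) \<Rightarrow> 'a rel \<Rightarrow> bool" where
  "prime_con ar op \<phi> \<longleftrightarrow> \<phi> \<in> Con ar op \<and> \<phi> \<noteq> UNIV \<and>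
     (\<forall>\<alpha>\<in>Con ar op. \<forall>\<beta>\<in>Con ar op. comm ar op \<alpha> \<beta> \<subseteq> \<phi> \<longrightarrow> \<alpha> \<subseteq> \<phi> \<or> \<beta> \<subseteq> \<phi>)"

definition rho :: "('f \<Rightarrow> nat) \<Rightarrow> ('f \<Rightarrow> 'a list \<Rightarrow> 'a) \<Rightarrow> 'a rel \<Rightarrow> 'a rel" where
  "rho ar op \<theta> = \<Inter>{\<phi>. prime_con ar op \<phi> \<and> \<theta> \<subseteq> \<phi>}"

definition semiprime :: "('f \<Rightarrow> nat) \<Rightarrow> ('f \<Rightarrow> 'a list \<Rightarrow> 'a) \<Rightarrow> bool" where
  "semiprime ar op \<longleftrightarrow> rho ar op Id = Id"

definition perp :: "('f \<Rightarrow> nat) \<Rightarrow> ('f \<Rightarrow> 'a list \<Rightarrow> 'a) \<Rightarrow> 'a rel \<Rightarrow> 'a rel" where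
  "perp ar op \<beta> = CJoin ar op {\<alpha> \<in> Con ar op. comm ar op \<alpha> \<beta> = Id}"

definition BCon :: "('f \<Rightarrow> nat) \<Rightarrow> ('f \<Rightarrow> 'a list \<Rightarrow> 'a) \<Rightarrow> 'a rel set" where
  "BCon ar op = {\<theta> \<in> Con ar op. \<exists>\<gamma>\<in>Con ar op. \<theta> \<inter> \<gamma> = Id \<and> CJoin ar op {\<theta>, \<gamma>} = UNIV}"

definition strongly_Baer :: "('f \<Rightarrow> nat) \<Rightarrow> ('f \<Rightarrow> 'a list \<Rightarrow> 'a) \<Rightarrow> bool" where
  "strongly_Baer ar op \<longleftrightarrow> (\<forall>\<theta>\<in>Con ar op. perp ar op \<theta> \<in> BCon ar op)"

definition Baer :: "('f \<Rightarrow> nat) \<Rightarrow> ('f \<Rightarrow> 'a list \<Rightarrow> 'a) \<Rightarrow> bool" where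
  "Baer ar op \<longleftrightarrow> (\<forall>\<theta>\<in>PCon ar op. perp ar op \<theta> \<in> BCon ar op)"

definition principal_commutators :: "('f \<Rightarrow> nat) \<Rightarrow> ('f \<Rightarrow> 'a list \<Rightarrow> 'a) \<Rightarrow> bool" where
  "principal_commutators ar op \<longleftrightarrow>
     (\<forall>\<alpha>\<in>PCon ar op. \<forall>\<beta>\<in>PCon ar op. comm ar op \<alpha> \<beta> \<in> PCon ar op)"

end

theory Submission
  imports Defs
begin

lemma Con_refl: "\<theta> \<in> Con ar op \<Longrightarrow> (x, x) \<in> \<theta>"
  unfolding Con_def is_congruence_def equiv_def refl_on_def by blast

lemma Con_sym: "\<theta> \<in> Con ar op \<Longrightarrow> (x, y) \<in> \<theta> \<Longrightarrow> (y, x) \<in> \<theta>"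
  unfolding Con_def is_congruence_def equiv_def sym_def by blast

lemma Con_trans: "\<theta> \<in> Con ar op \<Longrightarrow> (x, y) \<in> \<theta> \<Longrightarrow> (y, z) \<in> \<theta> \<Longrightarrow> (x, z) \<in> \<theta>"
  unfolding Con_def is_congruence_def equiv_def trans_def by blast

lemma Con_compat: "\<theta> \<in> Con ar op \<Longrightarrow> length xs = ar f \<Longrightarrow> length ys = ar f \<Longrightarrow>
   list_all2 (\<lambda>x y. (x, y) \<in> \<theta>) xs ys \<Longrightarrow> (op f xs, op f ys) \<in> \<theta>"
  unfolding Con_def is_congruence_def by blast

lemma ConI:
  assumes "\<And>x. (x, x) \<in> \<theta>" "\<And>x y. (x, y) \<in> \<theta> \<Longrightarrow> (y, x) \<in> \<theta>"
    "\<And>x y z. (x, y) \<in> \<theta> \<Longrightarrow> (y, z) \<in> \<theta> \<Longrightarrow> (x, z) \<in> \<theta>"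
    "\<And>f xs ys. length xs = ar f \<Longrightarrow> length ys = ar f \<Longrightarrow>
       list_all2 (\<lambda>x y. (x, y) \<in> \<theta>) xs ys \<Longrightarrow> (op f xs, op f ys) \<in> \<theta>"
  shows "\<theta> \<in> Con ar op"
proof -
  have "equiv UNIV \<theta>"
    by (rule equivI) (auto simp: refl_on_def sym_def trans_def intro: assms(1,2) elim: assms(3))
  then show ?thesis unfolding Con_def is_congruence_def using assms(4) by blast
qed

lemma Con_Inter:
  assumes "S \<subseteq> Con ar op" shows "\<Inter>S \<in> Con ar op"
proof (rule ConI)
  fix x show "(x, x) \<in> \<Inter>S"
  proof
    fix \<theta> assume "\<theta> \<in> S" then have "\<theta> \<in> Con ar op" using assms by blast
    then show "(x, x) \<in> \<theta>" by (rule Con_refl)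
  qed
next
  fix x y assume h: "(x, y) \<in> \<Inter>S" show "(y, x) \<in> \<Inter>S"
  proof
    fix \<theta> assume t: "\<theta> \<in> S" then have "\<theta> \<in> Con ar op" using assms by blast
    moreover have "(x, y) \<in> \<theta>" using h t by blast
    ultimately show "(y, x) \<in> \<theta>" by (rule Con_sym)
  qed
next
  fix x y z assume h: "(x, y) \<in> \<Inter>S" "(y, z) \<in> \<Inter>S" show "(x, z) \<in> \<Inter>S"
  proof
    fix \<theta> assume t: "\<theta> \<in> S" then have "\<theta> \<in> Con ar op" using assms by blast
    moreover have "(x, y) \<in> \<theta>" "(y, z) \<in> \<theta>" using h t by blast+
    ultimately show "(x, z) \<in> \<theta>" by (rule Con_trans)
  qed
next
  fix f xs ys assume l: "length xs = ar f" "length ys = ar f"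
    and la: "list_all2 (\<lambda>x y. (x, y) \<in> \<Inter>S) xs ys"
  show "(op f xs, op f ys) \<in> \<Inter>S"
  proof
    fix \<theta> assume th: "\<theta> \<in> S"
    then have tC: "\<theta> \<in> Con ar op" using assms by blast
    have "list_all2 (\<lambda>x y. (x, y) \<in> \<theta>) xs ys"
      using la by (rule list_all2_mono) (use th in blast)
    then show "(op f xs, op f ys) \<in> \<theta>" using Con_compat[OF tC l] by blast
  qed
qed

lemma Cg_Con: "Cg ar op X \<in> Con ar op"
  unfolding Cg_def by (rule Con_Inter) blast

lemma Cg_sup: "X \<subseteq> Cg ar op X"
  unfolding Cg_def by blast

lemma Cg_least: "\<theta> \<in> Con ar op \<Longrightarrow> X \<subseteq> \<theta> \<Longrightarrow> Cg ar op X \<subseteq> \<theta>"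
  unfolding Cg_def by blast

lemma Cg_Con_eq: "\<theta> \<in> Con ar op \<Longrightarrow> Cg ar op \<theta> = \<theta>"
  using Cg_sup Cg_least by blast

lemma Id_Con:
  fixes ar :: "'f \<Rightarrow> nat" and op :: "'f \<Rightarrow> 'a list \<Rightarrow> 'a"
  shows "Id \<in> Con ar op"
proof (rule ConI)
  fix f :: 'f and xs ys :: "'a list" assume "list_all2 (\<lambda>x y. (x, y) \<in> Id) xs ys"
  then have "xs = ys" by (induct rule: list_all2_induct) auto
  then show "(op f xs, op f ys) \<in> Id" by simp
qed auto

lemma UNIV_Con: "UNIV \<in> Con ar op"
  by (rule ConI) auto

lemma comm_refl: "(a, a) \<in> comm ar op \<alpha> \<beta>"
  unfolding comm_def
proof
  fix \<mu> assume "\<mu> \<in> {\<mu> \<in> Con ar op. TC ar op \<alpha> \<beta> \<mu>}"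
  then have "\<mu> \<in> Con ar op" by blast
  then show "(a, a) \<in> \<mu>" by (rule Con_refl)
qed

lemma comm_Id: "Id \<subseteq> comm ar op \<alpha> \<beta>"
  using comm_refl by fast

lemma Cg_sub_Id: "X \<subseteq> Id \<Longrightarrow> Cg ar op X = Id"
proof
  assume "X \<subseteq> Id" then show "Cg ar op X \<subseteq> Id" by (rule Cg_least[OF Id_Con])
next
  show "Id \<subseteq> Cg ar op X" using Con_refl[OF Cg_Con] by fast
qed

lemma chain_Con:
  fixes ar :: "'f \<Rightarrow> nat" and op :: "'f \<Rightarrow> 'a list \<Rightarrow> 'a"
  assumes CC: "C \<subseteq> Con ar op" and Cne: "C \<noteq> {}" and ch: "\<forall>A\<in>C. \<forall>B\<in>C. A \<subseteq> B \<or> B \<subseteq> A"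
  shows "\<Union>C \<in> Con ar op"
proof (rule ConI)
  fix x :: 'a
  obtain A where A: "A \<in> C" using Cne by blast
  then have "A \<in> Con ar op" using CC by blast
  then have "(x, x) \<in> A" by (rule Con_refl)
  then show "(x, x) \<in> \<Union>C" using A by blast
next
  fix x y :: 'a assume "(x, y) \<in> \<Union>C"
  then obtain A where A: "A \<in> C" "(x, y) \<in> A" by blast
  then have "A \<in> Con ar op" using CC by blast
  then have "(y, x) \<in> A" using A(2) by (rule Con_sym)
  then show "(y, x) \<in> \<Union>C" using A by blast
next
  fix x y z :: 'a assume "(x, y) \<in> \<Union>C" "(y, z) \<in> \<Union>C"
  then obtain A B where AB: "A \<in> C" "B \<in> C" "(x,y) \<in> A" "(y,z) \<in> B" by blast
  have "\<exists>D\<in>C. A \<subseteq> D \<and> B \<subseteq> D"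
  proof (cases "A \<subseteq> B")
    case True then show ?thesis using AB(2) by blast
  next
    case False then have "B \<subseteq> A" using ch AB(1,2) by blast
    then show ?thesis using AB(1) by blast
  qed
  then obtain D where D: "D \<in> C" "A \<subseteq> D" "B \<subseteq> D" by blast
  then have "D \<in> Con ar op" using CC by blast
  moreover have "(x, y) \<in> D" "(y, z) \<in> D" using AB D by blast+
  ultimately have "(x, z) \<in> D" by (rule Con_trans)
  then show "(x, z) \<in> \<Union>C" using D by blast
next
  have ex: "\<exists>\<theta>\<in>C. list_all2 (\<lambda>x y. (x, y) \<in> \<theta>) xs ys"
    if "list_all2 (\<lambda>x y. (x, y) \<in> \<Union>C) xs ys" for xs ys :: "'a list"
    using that
  proof (induct rule: list_all2_induct)
    case Nil then show ?case using Cne by auto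
  next
    case (Cons x xs y ys)
    then obtain A B where AB: "A \<in> C" "B \<in> C" "(x,y) \<in> A" "list_all2 (\<lambda>x y. (x, y) \<in> B) xs ys"
      by blast
    have "\<exists>D\<in>C. A \<subseteq> D \<and> B \<subseteq> D"
  proof (cases "A \<subseteq> B")
    case True then show ?thesis using AB(2) by blast
  next
    case False then have "B \<subseteq> A" using ch AB(1,2) by blast
    then show ?thesis using AB(1) by blast
  qed
    then obtain D where D: "D \<in> C" "A \<subseteq> D" "B \<subseteq> D" by blast
    have "list_all2 (\<lambda>x y. (x, y) \<in> D) xs ys"
      using AB(4) by (rule list_all2_mono) (use D in blast)
    then have "list_all2 (\<lambda>x y. (x, y) \<in> D) (x # xs) (y # ys)" using AB(3) D(2) by auto
    with D(1) show ?case by blast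
  qed
  fix f :: 'f and xs ys :: "'a list"
  assume l: "length xs = ar f" "length ys = ar f" and la: "list_all2 (\<lambda>x y. (x, y) \<in> \<Union>C) xs ys"
  obtain \<theta> where th: "\<theta> \<in> C" "list_all2 (\<lambda>x y. (x, y) \<in> \<theta>) xs ys" using ex la by blast
  then have "\<theta> \<in> Con ar op" using CC by blast
  then have "(op f xs, op f ys) \<in> \<theta>" using l th(2) by (rule Con_compat)
  then show "(op f xs, op f ys) \<in> \<Union>C" using th by blast
qed

lemma PCon_Con: "\<theta> \<in> PCon ar op \<Longrightarrow> \<theta> \<in> Con ar op"
  unfolding PCon_def using Cg_Con by blast

lemma cd_comm: "comm_commutative_distributive ar op \<Longrightarrow> \<alpha> \<in> Con ar op \<Longrightarrow> \<beta> \<in> Con ar op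
   \<Longrightarrow> comm ar op \<alpha> \<beta> = comm ar op \<beta> \<alpha>"
  unfolding comm_commutative_distributive_def by blast

lemma cd_dist: "comm_commutative_distributive ar op \<Longrightarrow> S \<subseteq> Con ar op \<Longrightarrow> \<beta> \<in> Con ar op
   \<Longrightarrow> comm ar op (CJoin ar op S) \<beta> = CJoin ar op ((\<lambda>\<alpha>. comm ar op \<alpha> \<beta>) ` S)"
  unfolding comm_commutative_distributive_def by blast

lemma comm_join2:
  assumes cd: "comm_commutative_distributive ar op"
    and "\<alpha> \<in> Con ar op" "\<alpha>' \<in> Con ar op" "\<beta> \<in> Con ar op"
  shows "comm ar op (Cg ar op (\<alpha> \<union> \<alpha>')) \<beta> = Cg ar op (comm ar op \<alpha> \<beta> \<union> comm ar op \<alpha>' \<beta>)"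
proof -
  have "comm ar op (CJoin ar op {\<alpha>, \<alpha>'}) \<beta> = CJoin ar op ((\<lambda>\<alpha>. comm ar op \<alpha> \<beta>) ` {\<alpha>, \<alpha>'})"
    using cd_dist[OF cd, of "{\<alpha>, \<alpha>'}" \<beta>] assms by blast
  then show ?thesis by (simp add: CJoin_def)
qed

lemma mono1:
  assumes cd: "comm_commutative_distributive ar op"
    and a: "\<alpha> \<in> Con ar op" "\<alpha>' \<in> Con ar op" "\<beta> \<in> Con ar op" and sub: "\<alpha> \<subseteq> \<alpha>'"
  shows "comm ar op \<alpha> \<beta> \<subseteq> comm ar op \<alpha>' \<beta>"
proof -
  have "Cg ar op (\<alpha> \<union> \<alpha>') = \<alpha>'" using sub Cg_Con_eq[OF a(2)] by (simp add: sup_absorb2)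
  then have "comm ar op \<alpha>' \<beta> = Cg ar op (comm ar op \<alpha> \<beta> \<union> comm ar op \<alpha>' \<beta>)"
    using comm_join2[OF cd a] by simp
  then show ?thesis using Cg_sup by blast
qed

lemma mono2:
  assumes cd: "comm_commutative_distributive ar op"
    and a: "\<beta> \<in> Con ar op" "\<beta>' \<in> Con ar op" "\<alpha> \<in> Con ar op" and sub: "\<beta> \<subseteq> \<beta>'"
  shows "comm ar op \<alpha> \<beta> \<subseteq> comm ar op \<alpha> \<beta>'"
  using mono1[OF cd a sub] cd_comm[OF cd] a by metis

lemma sub1:
  assumes cd: "comm_commutative_distributive ar op"
    and top: "\<forall>\<theta>\<in>Con ar op. comm ar op \<theta> UNIV = \<theta>"
    and a: "\<theta> \<in> Con ar op" "\<gamma> \<in> Con ar op"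
  shows "comm ar op \<theta> \<gamma> \<subseteq> \<theta>"
  using mono2[OF cd a(2) UNIV_Con a(1)] top a by blast

lemma sub2:
  assumes cd: "comm_commutative_distributive ar op"
    and top: "\<forall>\<theta>\<in>Con ar op. comm ar op \<theta> UNIV = \<theta>"
    and a: "\<theta> \<in> Con ar op" "\<gamma> \<in> Con ar op"
  shows "comm ar op \<theta> \<gamma> \<subseteq> \<gamma>"
  using sub1[OF cd top a(2,1)] cd_comm[OF cd a] by simp

lemma baer_key:
  assumes cd: "comm_commutative_distributive ar op"
    and top: "\<forall>\<theta>\<in>Con ar op. comm ar op \<theta> UNIV = \<theta>"
    and B: "Baer ar op" and th: "\<theta> \<in> PCon ar op" and ab: "comm ar op \<theta> \<theta> \<subseteq> Id"
  shows "\<theta> \<subseteq> Id"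
proof -
  have thC: "\<theta> \<in> Con ar op" using PCon_Con th .
  have cth: "comm ar op \<theta> \<theta> = Id" using ab comm_Id by blast
  define P where "P = perp ar op \<theta>"
  have "P \<in> BCon ar op" using B th unfolding Baer_def P_def by blast
  then obtain \<gamma> where PC: "P \<in> Con ar op" and gC: "\<gamma> \<in> Con ar op" and
    Pg: "P \<inter> \<gamma> = Id" and J: "CJoin ar op {P, \<gamma>} = UNIV"
    unfolding BCon_def by blast
  define S where "S = {\<alpha> \<in> Con ar op. comm ar op \<alpha> \<theta> = Id}"
  have thS: "\<theta> \<in> S" using thC cth unfolding S_def by blast
  have PS: "P = CJoin ar op S" unfolding P_def S_def perp_def by simp
  have thP: "\<theta> \<subseteq> P" using thS Cg_sup unfolding PS CJoin_def by blast
  have img: "(\<lambda>\<alpha>. comm ar op \<alpha> \<theta>) ` S = {Id}" using thS unfolding S_def by auto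
  have "comm ar op P \<theta> = CJoin ar op {Id}"
    using cd_dist[OF cd, of S \<theta>] thC img unfolding PS S_def by auto
  then have cP: "comm ar op P \<theta> = Id" using Cg_Con_eq[OF Id_Con] by (simp add: CJoin_def)
  have "comm ar op \<gamma> \<theta> \<subseteq> \<gamma>" using sub1[OF cd top gC thC] .
  moreover have "comm ar op \<gamma> \<theta> \<subseteq> \<theta>" using sub2[OF cd top gC thC] .
  ultimately have cg: "comm ar op \<gamma> \<theta> \<subseteq> Id" using thP Pg by blast
  have "\<theta> = comm ar op \<theta> UNIV" using top thC by simp
  also have "\<dots> = comm ar op UNIV \<theta>" using cd_comm[OF cd thC UNIV_Con] .
  also have "\<dots> = comm ar op (Cg ar op (P \<union> \<gamma>)) \<theta>" using J by (simp add: CJoin_def)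
  also have "\<dots> = Cg ar op (comm ar op P \<theta> \<union> comm ar op \<gamma> \<theta>)"
    using comm_join2[OF cd PC gC thC] .
  also have "\<dots> = Id" using cP cg by (intro Cg_sub_Id) blast
  finally show ?thesis by simp
qed

lemma exists_prime:
  assumes cd: "comm_commutative_distributive ar op"
    and top: "\<forall>\<theta>\<in>Con ar op. comm ar op \<theta> UNIV = \<theta>"
    and key: "\<forall>\<theta>\<in>PCon ar op. comm ar op \<theta> \<theta> \<subseteq> Id \<longrightarrow> \<theta> \<subseteq> Id"
    and ab: "a \<noteq> b"
  shows "\<exists>M. prime_con ar op M \<and> (a, b) \<notin> M"
proof -
  define nxt where "nxt p = (SOME q. q \<in> comm ar op (Cg ar op {p}) (Cg ar op {p}) \<and> fst q \<noteq> snd q)"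
    for p :: "'b \<times> 'b"
  have nx: "nxt p \<in> comm ar op (Cg ar op {p}) (Cg ar op {p}) \<and> fst (nxt p) \<noteq> snd (nxt p)"
    if "fst p \<noteq> snd p" for p
  proof -
    have "Cg ar op {p} \<in> PCon ar op" unfolding PCon_def by (cases p) auto
    moreover have "\<not> Cg ar op {p} \<subseteq> Id" using that Cg_sup[of "{p}" ar op] by (cases p) auto
    ultimately have "\<not> comm ar op (Cg ar op {p}) (Cg ar op {p}) \<subseteq> Id" using key by blast
    then have "\<exists>q. q \<in> comm ar op (Cg ar op {p}) (Cg ar op {p}) \<and> fst q \<noteq> snd q" by auto
    then show ?thesis unfolding nxt_def by (rule someI_ex)
  qed
  define p where "p n = (nxt ^^ n) (a, b)" for n
  have pS: "p (Suc n) = nxt (p n)" for n unfolding p_def by simp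
  have pn: "fst (p n) \<noteq> snd (p n)" for n
    by (induction n) (use ab nx pS p_def in auto)
  define \<alpha> where "\<alpha> n = Cg ar op {p n}" for n
  have aC: "\<alpha> n \<in> Con ar op" for n unfolding \<alpha>_def by (rule Cg_Con)
  have step: "p (Suc n) \<in> comm ar op (\<alpha> n) (\<alpha> n)" for n
    using nx[OF pn[of n]] pS unfolding \<alpha>_def by simp
  have dec: "\<alpha> (Suc n) \<subseteq> \<alpha> n" for n
    using step[of n] sub1[OF cd top aC aC, of n n] Cg_least[OF aC[of n], of "{p (Suc n)}"]
    unfolding \<alpha>_def[of "Suc n"] by blast
  have decm: "i \<le> m \<Longrightarrow> \<alpha> m \<subseteq> \<alpha> i" for i m
    by (rule lift_Suc_antimono_le[of \<alpha>]) (use dec in auto)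
  define F where "F = {\<phi> \<in> Con ar op. \<forall>n. p n \<notin> \<phi>}"
  have "\<forall>C\<in>chains F. \<exists>U\<in>F. \<forall>X\<in>C. X \<subseteq> U"
  proof
    fix C assume C: "C \<in> chains F"
    show "\<exists>U\<in>F. \<forall>X\<in>C. X \<subseteq> U"
    proof (cases "C = {}")
      case True
      have "p n \<notin> Id" for n using pn[of n] by (cases "p n") auto
      then have "Id \<in> F" unfolding F_def using Id_Con by blast
      then show ?thesis using True by blast
    next
      case False
      have CF: "C \<subseteq> F" and ch: "\<forall>A\<in>C. \<forall>B\<in>C. A \<subseteq> B \<or> B \<subseteq> A"
        using C unfolding chains_def chain_subset_def by auto
      have "\<Union>C \<in> Con ar op" using chain_Con[OF _ False ch] CF unfolding F_def by blast
      moreover have "\<forall>n. p n \<notin> \<Union>C" using CF unfolding F_def by blast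
      ultimately have "\<Union>C \<in> F" unfolding F_def by blast
      then show ?thesis by blast
    qed
  qed
  from Zorn_Lemma2[OF this] obtain M where MF: "M \<in> F" and Mmax: "\<forall>X\<in>F. M \<subseteq> X \<longrightarrow> X = M"
    by blast
  have MC: "M \<in> Con ar op" and Mp: "\<forall>n. p n \<notin> M" using MF unfolding F_def by auto
  have grow: "\<exists>i. p i \<in> Cg ar op (\<beta> \<union> M)" if bC: "\<beta> \<in> Con ar op" and bM: "\<not> \<beta> \<subseteq> M" for \<beta>
  proof (rule ccontr)
    assume "\<not> ?thesis"
    then have "Cg ar op (\<beta> \<union> M) \<in> F" unfolding F_def using Cg_Con by blast
    moreover have "M \<subseteq> Cg ar op (\<beta> \<union> M)" using Cg_sup by blast
    ultimately have "Cg ar op (\<beta> \<union> M) = M" using Mmax by blast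
    then show False using bM Cg_sup[of "\<beta> \<union> M" ar op] by blast
  qed
  have "prime_con ar op M"
    unfolding prime_con_def
  proof (intro conjI ballI impI)
    show "M \<in> Con ar op" by (rule MC)
    show "M \<noteq> UNIV" using Mp by blast
  next
    fix \<beta> \<gamma> assume bC: "\<beta> \<in> Con ar op" and gC: "\<gamma> \<in> Con ar op" and bg: "comm ar op \<beta> \<gamma> \<subseteq> M"
    show "\<beta> \<subseteq> M \<or> \<gamma> \<subseteq> M"
    proof (rule ccontr)
      assume "\<not> (\<beta> \<subseteq> M \<or> \<gamma> \<subseteq> M)"
      then have bM: "\<not> \<beta> \<subseteq> M" and gM: "\<not> \<gamma> \<subseteq> M" by auto
      define Bj where "Bj = Cg ar op (\<beta> \<union> M)"
      define Gj where "Gj = Cg ar op (\<gamma> \<union> M)"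
      have BjC: "Bj \<in> Con ar op" and GjC: "Gj \<in> Con ar op" unfolding Bj_def Gj_def using Cg_Con by auto
      obtain i where i: "p i \<in> Bj" using grow[OF bC bM] unfolding Bj_def by blast
      obtain j where j: "p j \<in> Gj" using grow[OF gC gM] unfolding Gj_def by blast
      define m where "m = max i j"
      have "\<alpha> i \<subseteq> Bj" unfolding \<alpha>_def using Cg_least[OF BjC] i by blast
      then have amB: "\<alpha> m \<subseteq> Bj" using decm[of i m] unfolding m_def by auto
      have "\<alpha> j \<subseteq> Gj" unfolding \<alpha>_def using Cg_least[OF GjC] j by blast
      then have amG: "\<alpha> m \<subseteq> Gj" using decm[of j m] unfolding m_def by auto
      have "comm ar op (\<alpha> m) (\<alpha> m) \<subseteq> comm ar op Bj (\<alpha> m)"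
        using mono1[OF cd aC BjC aC amB] .
      also have "\<dots> \<subseteq> comm ar op Bj Gj" using mono2[OF cd aC GjC BjC amG] .
      also have "\<dots> = Cg ar op (comm ar op \<beta> Gj \<union> comm ar op M Gj)"
        unfolding Bj_def using comm_join2[OF cd bC MC GjC] .
      also have "\<dots> \<subseteq> M"
      proof (rule Cg_least[OF MC])
        have "comm ar op M Gj \<subseteq> M" using sub1[OF cd top MC GjC] .
        moreover have "comm ar op \<beta> Gj \<subseteq> M"
        proof -
          have "comm ar op \<beta> Gj = comm ar op Gj \<beta>" using cd_comm[OF cd bC GjC] .
          also have "\<dots> = Cg ar op (comm ar op \<gamma> \<beta> \<union> comm ar op M \<beta>)"
            unfolding Gj_def using comm_join2[OF cd gC MC bC] .
          also have "\<dots> \<subseteq> M"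
          proof (rule Cg_least[OF MC])
            have "comm ar op \<gamma> \<beta> \<subseteq> M" using bg cd_comm[OF cd bC gC] by simp
            moreover have "comm ar op M \<beta> \<subseteq> M" using sub1[OF cd top MC bC] .
            ultimately show "comm ar op \<gamma> \<beta> \<union> comm ar op M \<beta> \<subseteq> M" by blast
          qed
          finally show ?thesis .
        qed
        ultimately show "comm ar op \<beta> Gj \<union> comm ar op M Gj \<subseteq> M" by blast
      qed
      finally have "p (Suc m) \<in> M" using step[of m] by blast
      then show False using Mp by blast
    qed
  qed
  moreover have "(a, b) \<notin> M" using Mp[rule_format, of 0] unfolding p_def by simp
  ultimately show ?thesis by blast
qed

lemma semiprime_of_key:
  assumes cd: "comm_commutative_distributive ar op"
    and top: "\<forall>\<theta>\<in>Con ar op. comm ar op \<theta> UNIV = \<theta>"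
    and key: "\<forall>\<theta>\<in>PCon ar op. comm ar op \<theta> \<theta> \<subseteq> Id \<longrightarrow> \<theta> \<subseteq> Id"
  shows "semiprime ar op"
  unfolding semiprime_def rho_def
proof
  show "\<Inter>{\<phi>. prime_con ar op \<phi> \<and> Id \<subseteq> \<phi>} \<subseteq> Id"
  proof
    fix x assume x: "x \<in> \<Inter>{\<phi>. prime_con ar op \<phi> \<and> Id \<subseteq> \<phi>}"
    obtain a b where xab: "x = (a, b)" by (cases x)
    show "x \<in> Id"
    proof (rule ccontr)
      assume "x \<notin> Id"
      then have "a \<noteq> b" using xab by simp
      then obtain M where M: "prime_con ar op M" "(a, b) \<notin> M" using exists_prime[OF cd top key] by blast
      have MC: "M \<in> Con ar op" using M(1) unfolding prime_con_def by blast
      have "Id \<subseteq> M" using Con_refl[OF MC] by fast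
      then show False using x M xab by blast
    qed
  qed
  show "Id \<subseteq> \<Inter>{\<phi>. prime_con ar op \<phi> \<and> Id \<subseteq> \<phi>}" by blast
qed

theorem mainTheorem6:
  fixes ar :: "'f \<Rightarrow> nat" and op :: "'f \<Rightarrow> 'a list \<Rightarrow> 'a"
  assumes "comm_commutative_distributive ar op"
    and "\<forall>\<theta>\<in>Con ar op. comm ar op \<theta> UNIV = \<theta>"
  shows "(strongly_Baer ar op \<longrightarrow> semiprime ar op) \<and>
         (Baer ar op \<and> principal_commutators ar op \<longrightarrow> semiprime ar op)"
proof -
  have "semiprime ar op" if B: "Baer ar op"
    using semiprime_of_key[OF assms] baer_key[OF assms B] by blast
  moreover have "Baer ar op" if "strongly_Baer ar op"
    using that PCon_Con unfolding strongly_Baer_def Baer_def by blast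
  ultimately show ?thesis by blast
qed

end
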